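(* Let $\Delta\ge 4$ be an integer and let $c_1,\dots,c_\Delta$ be defined by $c_\Delta=\frac{1}{\Delta}$ and $ic_i+c_{i+1}=1$ for $i=1,\dots,\Delta-1$. Let $\Delta'$ be an integer with $3\le \Delta'<\Delta$ and let $G\in\mathcal{G}_{\Delta'}$. Then $$\alpha(G)\ge \sum_{i=1}^{\Delta'} c_i|V_i(G)|.$$
   Context: All graphs are simple, finite and undirected. For an integer $D\ge 3$, $\mathcal{G}_{D}$ denotes the set of connected graphs $G\neq K_{D+1}$ with maximum degree $D$. For a graph $G$ and $i\ge 1$, $V_i(G)$ is the set of vertices of $G$ of degree $i$. $\alpha(G)$ is the independence number of $G$. *)

theory Defs
  imports Complex_Main
begin

definition simple_graph :: "'a set \<Rightarrow> ('a \<Rightarrow> 'a \<Rightarrow> bool) \<Rightarrow> bool" where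
  "simple_graph V E \<longleftrightarrow> finite V \<and> (\<forall>u v. E u v \<longrightarrow> u \<in> V \<and> v \<in> V)
     \<and> (\<forall>u v. E u v \<longrightarrow> E v u) \<and> (\<forall>v. \<not> E v v)"

definition degree :: "'a set \<Rightarrow> ('a \<Rightarrow> 'a \<Rightarrow> bool) \<Rightarrow> 'a \<Rightarrow> nat" where
  "degree V E v = card {u \<in> V. E v u}"

definition deg_set :: "'a set \<Rightarrow> ('a \<Rightarrow> 'a \<Rightarrow> bool) \<Rightarrow> nat \<Rightarrow> 'a set" where
  "deg_set V E i = {v \<in> V. degree V E v = i}"

definition max_degree :: "'a set \<Rightarrow> ('a \<Rightarrow> 'a \<Rightarrow> bool) \<Rightarrow> nat \<Rightarrow> bool" where
  "max_degree V E D \<longleftrightarrow> (\<forall>v\<in>V. degree V E v \<le> D) \<and> (\<exists>v\<in>V. degree V E v = D)"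

definition connected_graph :: "'a set \<Rightarrow> ('a \<Rightarrow> 'a \<Rightarrow> bool) \<Rightarrow> bool" where
  "connected_graph V E \<longleftrightarrow> V \<noteq> {} \<and> (\<forall>u\<in>V. \<forall>v\<in>V. E\<^sup>*\<^sup>* u v)"

definition is_complete_graph :: "'a set \<Rightarrow> ('a \<Rightarrow> 'a \<Rightarrow> bool) \<Rightarrow> bool" where
  "is_complete_graph V E \<longleftrightarrow> (\<forall>u\<in>V. \<forall>v\<in>V. u \<noteq> v \<longrightarrow> E u v)"

definition is_K :: "'a set \<Rightarrow> ('a \<Rightarrow> 'a \<Rightarrow> bool) \<Rightarrow> nat \<Rightarrow> bool" where
  "is_K V E n \<longleftrightarrow> card V = n \<and> is_complete_graph V E"

definition graph_class :: "nat \<Rightarrow> 'a set \<Rightarrow> ('a \<Rightarrow> 'a \<Rightarrow> bool) \<Rightarrow> bool" where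
  "graph_class D V E \<longleftrightarrow> simple_graph V E \<and> connected_graph V E \<and> max_degree V E D
     \<and> \<not> is_K V E (D + 1)"

definition independent_set :: "'a set \<Rightarrow> ('a \<Rightarrow> 'a \<Rightarrow> bool) \<Rightarrow> 'a set \<Rightarrow> bool" where
  "independent_set V E S \<longleftrightarrow> S \<subseteq> V \<and> (\<forall>u\<in>S. \<forall>v\<in>S. \<not> E u v)"

definition indep_number :: "'a set \<Rightarrow> ('a \<Rightarrow> 'a \<Rightarrow> bool) \<Rightarrow> nat" where
  "indep_number V E = Max (card ` {S. independent_set V E S})"

end

theory Submission
  imports Defs
begin



definition CC :: "(nat \<Rightarrow> real) \<Rightarrow> nat \<Rightarrow> real" where
  "CC c i = (if i = 0 then 1 else c i)"

locale cseq =
  fixes D :: nat and c :: "nat \<Rightarrow> real"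
  assumes D2: "D \<ge> 2"
    and cD: "c D = 1 / real D"
    and rec: "\<forall>i\<in>{1..D-1}. real i * c i + c (i + 1) = 1"
begin

lemma rec': "1 \<le> i \<Longrightarrow> i \<le> D - 1 \<Longrightarrow> real i * c i + c (i + 1) = 1"
  using rec by auto

lemma bounds0: "i \<le> D \<Longrightarrow> 1 \<le> i \<longrightarrow> 1 / real (i+1) \<le> c i \<and> c i \<le> 1 / real i"
proof (induction i rule: inc_induct)
  case base
  then show ?case using cD D2 by (simp add: frac_le)
next
  case (step n)
  show ?case proof
  assume "1 \<le> n"
  with step have step: "n < D" "1 \<le> n" "1 / real (Suc n+1) \<le> c (Suc n) \<and> c (Suc n) \<le> 1 / real (Suc n)" by auto
  have r: "real n * c n + c (n + 1) = 1" using rec'[of n] step by auto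
  have n1: "real n \<ge> 1" using step by simp
  have lo: "1 / real (n+2) \<le> c (n+1)" and hi: "c (n+1) \<le> 1 / real (n+1)"
    using step(3) by (auto simp: add.commute)
  have cn: "c n = (1 - c (n+1)) / real n" using r n1 by (simp add: field_simps)
  have "1 / real (n+1) \<le> c n"
  proof -
    have "real n > 0" using n1 by simp
    then have "real n + real n * real n \<noteq> 0" by (smt (verit) mult_pos_pos)
    then have "1 / real (n+1) = (1 - 1 / real (n+1)) / real n" by (simp add: field_simps)
    also have "\<dots> \<le> (1 - c (n+1)) / real n" using hi n1 by (intro divide_right_mono) auto
    finally show ?thesis using cn by simp
  qed
  moreover have "c n \<le> 1 / real n"
  proof -
    have "c (n+1) \<ge> 0" using lo by (smt (verit) divide_nonneg_nonneg of_nat_0_le_iff)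
    then have "(1 - c (n+1)) / real n \<le> 1 / real n" using n1 by (intro divide_right_mono) auto
    then show ?thesis using cn by simp
  qed
  ultimately show "1 / real (n+1) \<le> c n \<and> c n \<le> 1 / real n" by simp
qed
qed

lemma bounds: "1 \<le> i \<Longrightarrow> i \<le> D \<Longrightarrow> 1 / real (i+1) \<le> c i \<and> c i \<le> 1 / real i"
  using bounds0 by blast

lemma upper2: "1 \<le> i \<Longrightarrow> i \<le> D - 1 \<Longrightarrow> c i * (real i * (real i + 2)) \<le> real i + 1"
proof -
  assume a: "1 \<le> i" "i \<le> D - 1"
  have r: "real i * c i + c (i + 1) = 1" using rec' a by auto
  have lo: "1 / real (i+2) \<le> c (i+1)" using bounds[of "i+1"] a by (auto simp: add.commute)
  then have "1 \<le> c (i+1) * (real i + 2)" by (simp add: field_simps)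
  then have "real i * c i * (real i + 2) + 1 \<le> real i + 2" using r
    by (metis add_diff_cancel_left' diff_add_cancel distrib_right le_diff_eq mult_1 mult_left_mono of_nat_0_le_iff)
  then show ?thesis by (simp add: algebra_simps)
qed

lemma CC_step: "j < D \<Longrightarrow> CC c (Suc j) \<le> CC c j"
proof (cases "j = 0")
  case True
  then show ?thesis using bounds[of 1] D2 by (simp add: CC_def)
next
  case False
  assume "j < D"
  then have "c (Suc j) \<le> 1 / real (Suc j)" "1 / real (j+1) \<le> c j" using bounds[of "Suc j"] bounds[of j] False by auto
  then show ?thesis using False by (simp add: CC_def)
qed

lemma CC_mono: "i \<le> j \<Longrightarrow> j \<le> D \<Longrightarrow> CC c j \<le> CC c i"
proof (induction j rule: dec_induct)
  case base then show ?case by simp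
next
  case (step n)
  then show ?case using CC_step[of n] by simp
qed

lemma CC_rec: "1 \<le> k \<Longrightarrow> k \<le> D - 1 \<Longrightarrow> real k * CC c k + CC c (k+1) = 1"
  using rec'[of k] by (simp add: CC_def)

lemma CC_rec_le: "k \<le> D - 1 \<Longrightarrow> real k * CC c k + CC c (k+1) \<le> 1"
proof (cases "k = 0")
  case True then show ?thesis using bounds[of 1] D2 by (simp add: CC_def)
next
  case False
  assume "k \<le> D - 1" then show ?thesis using CC_rec[of k] False by simp
qed

lemma CC_le1: "CC c i \<le> 1" if "i \<le> D" using CC_mono[of 0 i] that by (simp add: CC_def)

lemma CC_nonneg: "i \<le> D \<Longrightarrow> 0 \<le> CC c i"
  using bounds[of i] by (cases "i = 0") (auto simp: CC_def intro: order_trans[rotated])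

lemma L2: "2 \<le> d \<Longrightarrow> d \<le> D \<Longrightarrow> real (d - 1) * CC c d + CC c (d - 1) \<le> 1"
proof -
  assume a: "2 \<le> d" "d \<le> D"
  have r: "real (d-1) * CC c (d-1) + CC c d = 1" using CC_rec[of "d-1"] a by simp
  have m: "CC c d \<le> CC c (d-1)" using CC_mono[of "d-1" d] a by simp
  have "real (d-1) \<ge> 1" using a by simp
  then have "(real (d-1) - 1) * CC c d \<le> (real (d-1) - 1) * CC c (d-1)" using m by (intro mult_left_mono) auto
  then show ?thesis using r by (simp add: algebra_simps)
qed

lemma convex: "2 \<le> d \<Longrightarrow> d \<le> D - 1 \<Longrightarrow> CC c d - CC c (d+1) \<le> CC c (d-1) - CC c d"
proof -
  assume a: "2 \<le> d" "d \<le> D - 1"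
  define x where "x = c d"
  define t where "t = real d"
  have t2: "t \<ge> 2" using a by (simp add: t_def)
  have r1: "(t - 1) * c (d-1) + x = 1" using rec'[of "d-1"] a by (simp add: x_def t_def of_nat_diff)
  have r2: "t * x + c (d+1) = 1" using rec'[of d] a by (simp add: x_def t_def)
  have up: "x * (t * (t + 2)) \<le> t + 1" using upper2[of d] a by (simp add: x_def t_def)
  have lo: "1 \<le> x * (t + 1)" using bounds[of d] a by (simp add: x_def t_def field_simps)
  have key: "x * (t*t + t - 1) \<le> t" using up lo by (simp add: algebra_simps)
  have e1: "(t-1) * c (d-1) = 1 - x" using r1 by simp
  have e2: "c (d+1) = 1 - t * x" using r2 by simp
  have "(t - 1) * (c (d-1) + c (d+1)) = (1 - x) + (t - 1) * (1 - t * x)"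
    by (simp only: distrib_left e1 e2)
  moreover have "(t - 1) * (2 * x) \<le> (1 - x) + (t - 1) * (1 - t * x)"
    using key by (simp add: algebra_simps)
  ultimately have "(t - 1) * (2 * x) \<le> (t - 1) * (c (d-1) + c (d+1))" by simp
  then have "2 * x \<le> c (d-1) + c (d+1)" using t2 by (simp add: mult_le_cancel_left)
  then show ?thesis using a by (simp add: CC_def x_def)
qed

end



definition nbh :: "'a set \<Rightarrow> ('a \<Rightarrow> 'a \<Rightarrow> bool) \<Rightarrow> 'a \<Rightarrow> 'a set" where
  "nbh V E x = {u \<in> V. E x u}"

definition cnb :: "'a set \<Rightarrow> ('a \<Rightarrow> 'a \<Rightarrow> bool) \<Rightarrow> 'a \<Rightarrow> 'a set" where
  "cnb V E x = insert x (nbh V E x)"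

definition iscl :: "'a set \<Rightarrow> ('a \<Rightarrow> 'a \<Rightarrow> bool) \<Rightarrow> 'a \<Rightarrow> bool" where
  "iscl V E x \<longleftrightarrow> (\<forall>u\<in>nbh V E x. \<forall>u'\<in>nbh V E x. u \<noteq> u' \<longrightarrow> E u u')
     \<and> (\<forall>u\<in>nbh V E x. degree V E u = degree V E x)"

definition wt :: "(nat \<Rightarrow> real) \<Rightarrow> 'a set \<Rightarrow> ('a \<Rightarrow> 'a \<Rightarrow> bool) \<Rightarrow> 'a \<Rightarrow> real" where
  "wt c V E x = (if iscl V E x then 1 / (real (degree V E x) + 1) else CC c (degree V E x))"

definition slk :: "(nat \<Rightarrow> real) \<Rightarrow> 'a set \<Rightarrow> ('a \<Rightarrow> 'a \<Rightarrow> bool) \<Rightarrow> ('a \<Rightarrow> nat) \<Rightarrow> 'a \<Rightarrow> real" where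
  "slk c V E h x = wt c V E x - (if iscl V E x
      then (\<Sum>y\<in>cnb V E x. CC c (h y)) / real (card (cnb V E x)) else CC c (h x))"

locale sgr =
  fixes E :: "'a \<Rightarrow> 'a \<Rightarrow> bool"
  assumes sym: "E u v \<Longrightarrow> E v u" and irr: "\<not> E v v"
begin

lemma deg_nbh: "degree V E x = card (nbh V E x)"
  by (simp add: degree_def nbh_def)

lemma nbh_fin: "finite V \<Longrightarrow> finite (nbh V E x)"
  by (simp add: nbh_def)

lemma cnb_fin: "finite V \<Longrightarrow> finite (cnb V E x)"
  by (simp add: cnb_def nbh_def)

lemma notin_nbh: "x \<notin> nbh V E x"
  using irr by (simp add: nbh_def)

lemma card_cnb: "finite V \<Longrightarrow> card (cnb V E x) = degree V E x + 1"
  using notin_nbh[of x V] by (simp add: cnb_def deg_nbh nbh_fin)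

lemma cnb_sub: "x \<in> V \<Longrightarrow> cnb V E x \<subseteq> V"
  by (auto simp: cnb_def nbh_def)

lemma nbh_mono: "V' \<subseteq> V \<Longrightarrow> nbh V' E x \<subseteq> nbh V E x"
  by (auto simp: nbh_def)

lemma deg_mono: "finite V \<Longrightarrow> V' \<subseteq> V \<Longrightarrow> degree V' E x \<le> degree V E x"
  unfolding deg_nbh by (intro card_mono nbh_fin nbh_mono) auto

lemma iscl_nbh:
  assumes fin: "finite V" and xV: "x \<in> V" and cl: "iscl V E x" and y: "y \<in> nbh V E x"
  shows "nbh V E y = cnb V E x - {y}"
proof -
  have sub: "cnb V E x - {y} \<subseteq> nbh V E y"
  proof
    fix z assume z: "z \<in> cnb V E x - {y}"
    show "z \<in> nbh V E y"
    proof (cases "z = x")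
      case True
      then show ?thesis using xV y sym by (auto simp: nbh_def)
    next
      case False
      then have "z \<in> nbh V E x" "z \<noteq> y" using z by (auto simp: cnb_def)
      then show ?thesis using cl y by (auto simp: iscl_def nbh_def)
    qed
  qed
  have "y \<in> cnb V E x" using y by (simp add: cnb_def)
  then have "card (cnb V E x - {y}) = degree V E x"
    using card_cnb[OF fin, of x] by (simp add: cnb_fin[OF fin])
  also have "\<dots> = degree V E y" using cl y by (simp add: iscl_def)
  also have "\<dots> = card (nbh V E y)" by (simp add: deg_nbh)
  finally show ?thesis using card_subset_eq[OF nbh_fin[OF fin] sub] by simp
qed

lemma iscl_mem:
  assumes fin: "finite V" and xV: "x \<in> V" and cl: "iscl V E x" and y: "y \<in> cnb V E x"
  shows "cnb V E y = cnb V E x \<and> iscl V E y \<and> degree V E y = degree V E x"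
proof (cases "y = x")
  case True then show ?thesis using cl by simp
next
  case False
  then have yn: "y \<in> nbh V E x" using y by (simp add: cnb_def)
  have ny: "nbh V E y = cnb V E x - {y}" by (rule iscl_nbh[OF fin xV cl yn])
  have dy: "degree V E y = degree V E x" using cl yn by (simp add: iscl_def)
  have c1: "cnb V E y = cnb V E x" using ny y by (auto simp: cnb_def)
  have "iscl V E y"
    unfolding iscl_def
  proof (intro conjI ballI impI)
    fix u u' assume u: "u \<in> nbh V E y" and u': "u' \<in> nbh V E y" and ne: "u \<noteq> u'"
    show "E u u'"
    proof (cases "u = x")
      case True
      then have "u' \<in> nbh V E x" using u' ne ny by (auto simp: cnb_def)
      then show ?thesis using True by (simp add: nbh_def)
    next
      case False
      note uF = False
      show ?thesis
      proof (cases "u' = x")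
        case True
        have "u \<in> nbh V E x" using u uF ny by (auto simp: cnb_def)
        then show ?thesis using True sym by (simp add: nbh_def)
      next
        case False
        have "u \<in> nbh V E x" "u' \<in> nbh V E x" using u u' uF False ny by (auto simp: cnb_def)
        then show ?thesis using ne cl unfolding iscl_def by blast
      qed
    qed
  next
    fix u assume u: "u \<in> nbh V E y"
    show "degree V E u = degree V E y"
    proof (cases "u = x")
      case True then show ?thesis using dy by simp
    next
      case False
      then have "u \<in> nbh V E x" using u ny by (auto simp: cnb_def)
      then show ?thesis using cl dy by (simp add: iscl_def)
    qed
  qed
  then show ?thesis using c1 dy by simp
qed

lemma iscl_closed:
  assumes fin: "finite V" and xV: "x \<in> V" and cl: "iscl V E x"
    and zV: "z \<in> V" and z: "z \<notin> cnb V E x" and u: "u \<in> cnb V E x"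
  shows "\<not> E z u"
proof
  assume ezu: "E z u"
  show False
  proof (cases "u = x")
    case True
    then have "z \<in> nbh V E x" using ezu sym zV by (simp add: nbh_def)
    then show False using z by (simp add: cnb_def)
  next
    case False
    then have un: "u \<in> nbh V E x" using u by (simp add: cnb_def)
    then have "nbh V E u = cnb V E x - {u}" by (rule iscl_nbh[OF fin xV cl])
    moreover have "z \<in> nbh V E u" using ezu sym zV by (simp add: nbh_def)
    ultimately show False using z by simp
  qed
qed

end



locale gsetup = cseq D c + sgr E for D c and E :: "'a \<Rightarrow> 'a \<Rightarrow> bool"
begin

lemma avg_sum:
  assumes fin: "finite V"
  shows "(\<Sum>x\<in>V \<inter> {x. iscl V E x}. (\<Sum>y\<in>cnb V E x. CC c (h y)) / real (card (cnb V E x)))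
       = (\<Sum>x\<in>V \<inter> {x. iscl V E x}. CC c (h x))"
proof -
  let ?A = "V \<inter> {x. iscl V E x}"
  have finA: "finite ?A" using fin by simp
  have mem: "cnb V E y = cnb V E x \<and> iscl V E y" if "x \<in> ?A" "y \<in> cnb V E x" for x y
    using iscl_mem[OF fin, of x y] that by auto
  have sub: "cnb V E x \<subseteq> ?A" if "x \<in> ?A" for x
    using mem[OF that] cnb_sub[of x V] that by auto
  have "(\<Sum>x\<in>?A. (\<Sum>y\<in>cnb V E x. CC c (h y)) / real (card (cnb V E x)))
      = (\<Sum>x\<in>?A. \<Sum>y\<in>{y. y \<in> ?A \<and> y \<in> cnb V E x}. CC c (h y) / real (card (cnb V E y)))"
  proof (rule sum.cong[OF refl])
    fix x assume x: "x \<in> ?A"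
    have e: "{y. y \<in> ?A \<and> y \<in> cnb V E x} = cnb V E x" using sub[OF x] by auto
    show "(\<Sum>y\<in>cnb V E x. CC c (h y)) / real (card (cnb V E x))
        = (\<Sum>y\<in>{y. y \<in> ?A \<and> y \<in> cnb V E x}. CC c (h y) / real (card (cnb V E y)))"
      unfolding e sum_divide_distrib
    proof (intro sum.cong refl)
      fix y assume "y \<in> cnb V E x"
      then have "cnb V E y = cnb V E x" using mem[OF x] by blast
      then show "CC c (h y) / real (card (cnb V E x)) = CC c (h y) / real (card (cnb V E y))" by simp
    qed
  qed
  also have "\<dots> = (\<Sum>y\<in>?A. \<Sum>x\<in>{x. x \<in> ?A \<and> y \<in> cnb V E x}. CC c (h y) / real (card (cnb V E y)))"
    by (rule sum.swap_restrict[OF finA finA])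
  also have "\<dots> = (\<Sum>y\<in>?A. CC c (h y))"
  proof (rule sum.cong[OF refl])
    fix y assume y: "y \<in> ?A"
    have e: "{x. x \<in> ?A \<and> y \<in> cnb V E x} = cnb V E y"
    proof
      show "{x. x \<in> ?A \<and> y \<in> cnb V E x} \<subseteq> cnb V E y"
      proof
        fix x assume "x \<in> {x. x \<in> ?A \<and> y \<in> cnb V E x}"
        then have "x \<in> ?A" "y \<in> cnb V E x" by auto
        then have "cnb V E y = cnb V E x" using mem by blast
        then show "x \<in> cnb V E y" by (simp add: cnb_def)
      qed
      show "cnb V E y \<subseteq> {x. x \<in> ?A \<and> y \<in> cnb V E x}"
      proof
        fix x assume x: "x \<in> cnb V E y"
        then have "cnb V E x = cnb V E y" using mem[OF y] by blast
        then have "y \<in> cnb V E x" by (simp add: cnb_def)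
        then show "x \<in> {x. x \<in> ?A \<and> y \<in> cnb V E x}" using sub[OF y] x by blast
      qed
    qed
    have "card (cnb V E y) > 0" using card_cnb[OF fin, of y] by simp
    then show "(\<Sum>x\<in>{x. x \<in> ?A \<and> y \<in> cnb V E x}. CC c (h y) / real (card (cnb V E y))) = CC c (h y)"
      unfolding e by simp
  qed
  finally show ?thesis .
qed

lemma S1:
  assumes fin: "finite V"
  shows "(\<Sum>x\<in>V. wt c V E x) = (\<Sum>x\<in>V. CC c (h x)) + (\<Sum>x\<in>V. slk c V E h x)"
proof -
  have "(\<Sum>x\<in>V. if iscl V E x then (\<Sum>y\<in>cnb V E x. CC c (h y)) / real (card (cnb V E x)) else CC c (h x))
     = (\<Sum>x\<in>V \<inter> {x. iscl V E x}. (\<Sum>y\<in>cnb V E x. CC c (h y)) / real (card (cnb V E x)))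
       + (\<Sum>x\<in>V \<inter> - {x. iscl V E x}. CC c (h x))"
    by (rule sum.If_cases[OF fin])
  also have "\<dots> = (\<Sum>x\<in>V \<inter> {x. iscl V E x}. CC c (h x)) + (\<Sum>x\<in>V - {x. iscl V E x}. CC c (h x))"
    by (simp add: avg_sum[OF fin] Diff_eq)
  also have "\<dots> = (\<Sum>x\<in>V. CC c (h x))" by (rule sum.Int_Diff[OF fin, symmetric])
  finally have k: "(\<Sum>x\<in>V. if iscl V E x then (\<Sum>y\<in>cnb V E x. CC c (h y)) / real (card (cnb V E x)) else CC c (h x))
     = (\<Sum>x\<in>V. CC c (h x))" .
  show ?thesis unfolding slk_def sum_subtractf k by simp
qed

lemma clique_sum:
  assumes fin: "finite V" and xV: "x \<in> V" and cl: "iscl V E x"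
    and hyp: "\<forall>y\<in>V. degree V E y \<le> h y \<and> h y \<le> D - 1"
    and y0: "y0 \<in> cnb V E x" and y0l: "degree V E y0 < h y0"
  shows "(\<Sum>y\<in>cnb V E x. CC c (h y)) \<le> 1"
proof -
  let ?k = "degree V E x"
  have dy: "\<And>y. y \<in> cnb V E x \<Longrightarrow> degree V E y = ?k" using iscl_mem[OF fin xV cl] by blast
  have yV: "\<And>y. y \<in> cnb V E x \<Longrightarrow> y \<in> V" using cnb_sub[OF xV] by blast
  have finc: "finite (cnb V E x)" by (rule cnb_fin[OF fin])
  have "(\<Sum>y\<in>cnb V E x. CC c (h y)) = CC c (h y0) + (\<Sum>y\<in>cnb V E x - {y0}. CC c (h y))"
    using sum.remove[OF finc y0] by simp
  also have "\<dots> \<le> CC c (?k + 1) + real ?k * CC c ?k"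
  proof (rule add_mono)
    have "?k + 1 \<le> h y0" using y0l dy[OF y0] by simp
    moreover have "h y0 \<le> D" using hyp yV[OF y0] by auto
    ultimately show "CC c (h y0) \<le> CC c (?k + 1)" by (rule CC_mono)
    have "(\<Sum>y\<in>cnb V E x - {y0}. CC c (h y)) \<le> real (card (cnb V E x - {y0})) * CC c ?k"
    proof (rule sum_bounded_above)
      fix y assume y: "y \<in> cnb V E x - {y0}"
      then have "?k \<le> h y" "h y \<le> D" using dy[of y] hyp yV[of y] by auto
      then show "CC c (h y) \<le> CC c ?k" by (rule CC_mono)
    qed
    also have "card (cnb V E x - {y0}) = ?k" using card_cnb[OF fin, of x] y0 finc by simp
    finally show "(\<Sum>y\<in>cnb V E x - {y0}. CC c (h y)) \<le> real ?k * CC c ?k" .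
  qed
  also have "\<dots> \<le> 1"
  proof -
    have "?k < h y0" using y0l dy[OF y0] by simp
    then have "?k \<le> D - 1" using hyp yV[OF y0] by auto
    then show ?thesis using CC_rec_le[of ?k] by simp
  qed
  finally show ?thesis .
qed

lemma S2:
  assumes fin: "finite V" and xV: "x \<in> V"
    and hyp: "\<forall>y\<in>V. degree V E y \<le> h y \<and> h y \<le> D - 1"
    and hcl: "\<forall>y\<in>V. iscl V E y \<longrightarrow> (\<exists>z\<in>cnb V E y. degree V E z < h z)"
  shows "0 \<le> slk c V E h x"
proof (cases "iscl V E x")
  case True
  then obtain y0 where y0: "y0 \<in> cnb V E x" "degree V E y0 < h y0" using hcl xV by blast
  have s: "(\<Sum>y\<in>cnb V E x. CC c (h y)) \<le> 1" by (rule clique_sum[OF fin xV True hyp y0])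
  have cc: "real (card (cnb V E x)) = real (degree V E x) + 1" using card_cnb[OF fin] by simp
  have "(\<Sum>y\<in>cnb V E x. CC c (h y)) / (real (degree V E x) + 1) \<le> 1 / (real (degree V E x) + 1)"
    using s by (intro divide_right_mono) auto
  then show ?thesis using True by (simp add: slk_def wt_def cc)
next
  case False
  have "degree V E x \<le> h x" "h x \<le> D" using hyp xV by auto
  then have "CC c (h x) \<le> CC c (degree V E x)" by (rule CC_mono)
  then show ?thesis using False by (simp add: slk_def wt_def)
qed

end



context gsetup
begin

lemma S3:
  assumes fin: "finite V" and hyp: "\<forall>y\<in>V. degree V E y \<le> h y \<and> h y \<le> D - 1"
    and hcl: "\<forall>y\<in>V. iscl V E y \<longrightarrow> (\<exists>z\<in>cnb V E y. degree V E z < h z)"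
    and wV: "w \<in> V" and d2: "2 \<le> d" and dD: "d \<le> D - 1" and hw: "h w = d"
    and dw: "degree V E w < d" and hge: "\<forall>y\<in>cnb V E w. d \<le> h y"
  shows "CC c (d - 1) - CC c d \<le> (\<Sum>x\<in>V. slk c V E h x)"
proof -
  have nn: "\<And>x. x \<in> V \<Longrightarrow> 0 \<le> slk c V E h x" using S2[OF fin _ hyp hcl] by blast
  show ?thesis
  proof (cases "iscl V E w")
    case False
    have "degree V E w \<le> d - 1" "d - 1 \<le> D" using dw dD by auto
    then have "CC c (d - 1) \<le> CC c (degree V E w)" by (rule CC_mono)
    then have "CC c (d - 1) - CC c d \<le> slk c V E h w" using False hw by (simp add: slk_def wt_def)
    also have "\<dots> \<le> (\<Sum>x\<in>V. slk c V E h x)" by (rule member_le_sum[OF wV _ fin]) (use nn in auto)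
    finally show ?thesis .
  next
    case True
    let ?K = "cnb V E w"
    let ?k = "degree V E w"
    let ?s = "\<Sum>y\<in>?K. CC c (h y)"
    have finK: "finite ?K" by (rule cnb_fin[OF fin])
    have cK: "real (card ?K) = real ?k + 1" using card_cnb[OF fin] by simp
    have KV: "?K \<subseteq> V" by (rule cnb_sub[OF wV])
    have mem: "\<And>x. x \<in> ?K \<Longrightarrow> cnb V E x = ?K \<and> iscl V E x \<and> degree V E x = ?k"
      using iscl_mem[OF fin wV True] by blast
    have "(\<Sum>x\<in>?K. slk c V E h x) = (\<Sum>x\<in>?K. 1 / (real ?k + 1) - ?s / (real ?k + 1))"
    proof (rule sum.cong[OF refl])
      fix x assume x: "x \<in> ?K"
      show "slk c V E h x = 1 / (real ?k + 1) - ?s / (real ?k + 1)"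
        using mem[OF x] cK by (simp add: slk_def wt_def)
    qed
    also have "\<dots> = (real ?k + 1) * ((1 - ?s) / (real ?k + 1))"
      using cK by (simp add: diff_divide_distrib)
    also have "\<dots> = 1 - ?s" by (simp add: add_pos_nonneg)
    finally have sK: "(\<Sum>x\<in>?K. slk c V E h x) = 1 - ?s" .
    have "?s \<le> real (card ?K) * CC c d"
    proof (rule sum_bounded_above)
      fix y assume y: "y \<in> ?K"
      have "y \<in> V" using y KV by auto
      then have "d \<le> h y" "h y \<le> D" using hge y hyp by auto
      then show "CC c (h y) \<le> CC c d" by (rule CC_mono)
    qed
    then have s1: "?s \<le> (real ?k + 1) * CC c d" using cK by simp
    have l2: "real (d - 1) * CC c d + CC c (d - 1) \<le> 1" using L2[OF d2] dD by simp
    have "real ?k \<le> real (d - 1)" using dw by simp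
    moreover have "0 \<le> CC c d" using CC_nonneg[of d] dD by simp
    ultimately have "real ?k * CC c d \<le> real (d - 1) * CC c d" by (rule mult_right_mono)
    then have "CC c (d - 1) - CC c d \<le> (\<Sum>x\<in>?K. slk c V E h x)"
      using sK s1 l2 by (simp add: algebra_simps)
    also have "\<dots> \<le> (\<Sum>x\<in>V. slk c V E h x)"
      by (rule sum_mono2[OF fin KV]) (use nn in auto)
    finally show ?thesis .
  qed
qed

lemma nbh_eq_deg:
  assumes fin: "finite V" and sub: "V' \<subseteq> V" and eq: "degree V' E y = degree V E y"
  shows "nbh V' E y = nbh V E y"
  using card_subset_eq[OF nbh_fin[OF fin] nbh_mono[OF sub]] eq by (simp add: deg_nbh)

lemma iscl_transfer:
  assumes "nbh V' E y = nbh V E y" and "\<forall>u\<in>nbh V E y. degree V' E u = degree V E u"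
    and "degree V' E y = degree V E y" and "iscl V' E y"
  shows "iscl V E y"
  using assms unfolding iscl_def by auto

lemma iscl_transfer2:
  assumes "nbh V' E y = nbh V E y" and "\<forall>u\<in>nbh V E y. degree V' E u = degree V E u"
    and "degree V' E y = degree V E y" and "iscl V E y"
  shows "iscl V' E y"
  using assms unfolding iscl_def by auto

lemma noncl:
  assumes fin: "finite V" and sub: "V' \<subseteq> V" and yV: "y \<in> V'" and cl: "iscl V' E y"
    and all: "\<forall>z\<in>cnb V' E y. degree V' E z = degree V E z"
  shows "iscl V E y"
proof -
  have ny: "nbh V' E y = nbh V E y" using nbh_eq_deg[OF fin sub] all by (simp add: cnb_def)
  show ?thesis
  proof (rule iscl_transfer[OF ny _ _ cl])
    show "\<forall>u\<in>nbh V E y. degree V' E u = degree V E u" using all ny by (simp add: cnb_def)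
    show "degree V' E y = degree V E y" using all by (simp add: cnb_def)
  qed
qed

end



context gsetup
begin

lemma step_lemma:
  assumes fin: "finite V" and vV: "v \<in> V" and deg: "\<forall>x\<in>V. degree V E x \<le> D - 1"
    and IH: "\<And>W. card W < card V \<Longrightarrow> finite W \<Longrightarrow> \<forall>x\<in>W. degree W E x \<le> D - 1 \<Longrightarrow>
              \<exists>S\<subseteq>W. (\<forall>u\<in>S. \<forall>v\<in>S. \<not> E u v) \<and> (\<Sum>x\<in>W. wt c W E x) \<le> real (card S)"
    and ineq: "(\<Sum>x\<in>V. wt c V E x) \<le> 1 + (\<Sum>x\<in>V - cnb V E v. wt c (V - cnb V E v) E x)"
  shows "\<exists>S\<subseteq>V. (\<forall>u\<in>S. \<forall>v\<in>S. \<not> E u v) \<and> (\<Sum>x\<in>V. wt c V E x) \<le> real (card S)"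
proof -
  let ?W = "V - cnb V E v"
  have finW: "finite ?W" using fin by simp
  have "?W \<subset> V" using vV by (auto simp: cnb_def)
  then have cW: "card ?W < card V" using fin by (rule psubset_card_mono[rotated])
  have dW: "\<forall>x\<in>?W. degree ?W E x \<le> D - 1"
    using deg deg_mono[OF fin, of ?W] by (meson Diff_subset DiffD1 le_trans)
  obtain S' where S': "S' \<subseteq> ?W" "\<forall>u\<in>S'. \<forall>v\<in>S'. \<not> E u v" "(\<Sum>x\<in>?W. wt c ?W E x) \<le> real (card S')"
    using IH[OF cW finW dW] by blast
  have vS: "v \<notin> S'" using S'(1) by (auto simp: cnb_def)
  have finS: "finite S'" using S'(1) finW finite_subset by blast
  have noE: "\<And>s. s \<in> S' \<Longrightarrow> \<not> E v s" using S'(1) by (auto simp: cnb_def nbh_def)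
  have ind: "\<forall>u\<in>insert v S'. \<forall>w\<in>insert v S'. \<not> E u w"
    using S'(2) noE sym irr by blast
  have "card (insert v S') = card S' + 1" using vS finS by simp
  then have "(\<Sum>x\<in>V. wt c V E x) \<le> real (card (insert v S'))" using ineq S'(3) by simp
  moreover have "insert v S' \<subseteq> V" using S'(1) vV by auto
  ultimately show ?thesis using ind by blast
qed

lemma caseA:
  assumes fin: "finite V" and vV: "v \<in> V" and cl: "iscl V E v"
  shows "(\<Sum>x\<in>V. wt c V E x) \<le> 1 + (\<Sum>x\<in>V - cnb V E v. wt c (V - cnb V E v) E x)"
proof -
  let ?N = "cnb V E v"
  let ?W = "V - ?N"
  let ?k = "degree V E v"
  have NV: "?N \<subseteq> V" by (rule cnb_sub[OF vV])
  have finN: "finite ?N" by (rule cnb_fin[OF fin])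
  have split: "(\<Sum>x\<in>V. wt c V E x) = (\<Sum>x\<in>?W. wt c V E x) + (\<Sum>x\<in>?N. wt c V E x)"
    by (rule sum.subset_diff[OF NV fin])
  have "(\<Sum>x\<in>?N. wt c V E x) = (\<Sum>x\<in>?N. 1 / (real ?k + 1))"
  proof (rule sum.cong[OF refl])
    fix y assume "y \<in> ?N"
    then have "iscl V E y" "degree V E y = ?k" using iscl_mem[OF fin vV cl] by blast+
    then show "wt c V E y = 1 / (real ?k + 1)" by (simp add: wt_def)
  qed
  also have "\<dots> = 1" using card_cnb[OF fin, of v] by (simp add: add_pos_nonneg)
  finally have sN: "(\<Sum>x\<in>?N. wt c V E x) = 1" .
  have nb: "nbh ?W E y = nbh V E y" if y: "y \<in> ?W" for y
  proof
    show "nbh ?W E y \<subseteq> nbh V E y" by (rule nbh_mono) auto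
    show "nbh V E y \<subseteq> nbh ?W E y"
    proof
      fix u assume u: "u \<in> nbh V E y"
      have "u \<notin> ?N"
      proof
        assume "u \<in> ?N"
        then have "\<not> E y u" using iscl_closed[OF fin vV cl, of y u] y by auto
        then show False using u by (simp add: nbh_def)
      qed
      then show "u \<in> nbh ?W E y" using u by (auto simp: nbh_def)
    qed
  qed
  have dg: "degree ?W E y = degree V E y" if "y \<in> ?W" for y
    using nb[OF that] by (simp add: deg_nbh)
  have "(\<Sum>x\<in>?W. wt c V E x) = (\<Sum>x\<in>?W. wt c ?W E x)"
  proof (rule sum.cong[OF refl])
    fix y assume y: "y \<in> ?W"
    have nbW: "\<And>u. u \<in> nbh V E y \<Longrightarrow> u \<in> ?W" using nb[OF y] by (auto simp: nbh_def)
    have a2: "\<forall>u\<in>nbh V E y. degree ?W E u = degree V E u" using dg nbW by blast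
    have "iscl ?W E y = iscl V E y"
      using iscl_transfer[OF nb[OF y] a2 dg[OF y]] iscl_transfer2[OF nb[OF y] a2 dg[OF y]] by blast
    then show "wt c V E y = wt c ?W E y" using dg[OF y] by (simp add: wt_def)
  qed
  then show ?thesis using split sN by simp
qed

end



context gsetup
begin

lemma restW:
  assumes fin: "finite V" and vV: "v \<in> V" and deg: "\<forall>x\<in>V. degree V E x \<le> D - 1"
    and ncl: "\<forall>x\<in>V. \<not> iscl V E x"
  shows "\<forall>y\<in>V - cnb V E v. degree (V - cnb V E v) E y \<le> degree V E y \<and> degree V E y \<le> D - 1"
    and "\<forall>y\<in>V - cnb V E v. iscl (V - cnb V E v) E y \<longrightarrow>
           (\<exists>z\<in>cnb (V - cnb V E v) E y. degree (V - cnb V E v) E z < degree V E z)"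
proof -
  let ?W = "V - cnb V E v"
  show "\<forall>y\<in>?W. degree ?W E y \<le> degree V E y \<and> degree V E y \<le> D - 1"
    using deg deg_mono[OF fin, of ?W] by auto
  show "\<forall>y\<in>?W. iscl ?W E y \<longrightarrow> (\<exists>z\<in>cnb ?W E y. degree ?W E z < degree V E z)"
  proof (intro ballI impI)
    fix y assume y: "y \<in> ?W" and cl: "iscl ?W E y"
    show "\<exists>z\<in>cnb ?W E y. degree ?W E z < degree V E z"
    proof (rule ccontr)
      assume "\<not> ?thesis"
      then have "\<forall>z\<in>cnb ?W E y. degree ?W E z = degree V E z"
        using deg_mono[OF fin, of ?W] by (meson Diff_subset le_neq_implies_less)
      then have "iscl V E y" using noncl[OF fin _ y cl] by blast
      then show False using ncl y by blast
    qed
  qed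
qed

lemma caseB1:
  assumes fin: "finite V" and vV: "v \<in> V" and deg: "\<forall>x\<in>V. degree V E x \<le> D - 1"
    and ncl: "\<forall>x\<in>V. \<not> iscl V E x"
    and mn: "\<forall>x\<in>V. degree V E v \<le> degree V E x"
    and u0: "u0 \<in> nbh V E v" and u0d: "degree V E v < degree V E u0"
  shows "(\<Sum>x\<in>V. wt c V E x) \<le> 1 + (\<Sum>x\<in>V - cnb V E v. wt c (V - cnb V E v) E x)"
proof -
  let ?N = "cnb V E v"
  let ?W = "V - ?N"
  let ?d = "degree V E v"
  have NV: "?N \<subseteq> V" by (rule cnb_sub[OF vV])
  have wtV: "\<And>x. x \<in> V \<Longrightarrow> wt c V E x = CC c (degree V E x)" using ncl by (simp add: wt_def)
  have split: "(\<Sum>x\<in>V. wt c V E x) = (\<Sum>x\<in>?W. CC c (degree V E x)) + (\<Sum>x\<in>?N. CC c (degree V E x))"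
    using sum.subset_diff[OF NV fin, of "wt c V E"] wtV NV by (simp add: subset_iff)
  have finW: "finite ?W" using fin by simp
  note R = restW[OF fin vV deg ncl]
  have s1: "(\<Sum>x\<in>?W. wt c ?W E x) = (\<Sum>x\<in>?W. CC c (degree V E x)) + (\<Sum>x\<in>?W. slk c ?W E (degree V E) x)"
    by (rule S1[OF finW])
  have "0 \<le> (\<Sum>x\<in>?W. slk c ?W E (degree V E) x)"
    using S2[OF finW _ R] by (intro sum_nonneg) auto
  then have pW: "(\<Sum>x\<in>?W. CC c (degree V E x)) \<le> (\<Sum>x\<in>?W. wt c ?W E x)" using s1 by simp
  have u0V: "u0 \<in> V" using u0 by (simp add: nbh_def)
  have finn: "finite (nbh V E v)" by (rule nbh_fin[OF fin])
  have dpos: "1 \<le> ?d" using u0 finn by (simp add: deg_nbh Suc_le_eq card_gt_0_iff) blast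
  have dD: "?d + 1 \<le> D - 1" using u0d deg u0V by fastforce
  have "(\<Sum>x\<in>?N. CC c (degree V E x)) = CC c ?d + (\<Sum>x\<in>nbh V E v. CC c (degree V E x))"
    using notin_nbh[of v V] finn by (simp add: cnb_def)
  also have "(\<Sum>x\<in>nbh V E v. CC c (degree V E x)) = CC c (degree V E u0) + (\<Sum>x\<in>nbh V E v - {u0}. CC c (degree V E x))"
    by (rule sum.remove[OF finn u0])
  also have "\<dots> \<le> CC c (?d + 1) + real (?d - 1) * CC c ?d"
  proof (rule add_mono)
    show "CC c (degree V E u0) \<le> CC c (?d + 1)" using u0d deg u0V by (intro CC_mono) auto
    have "(\<Sum>x\<in>nbh V E v - {u0}. CC c (degree V E x)) \<le> real (card (nbh V E v - {u0})) * CC c ?d"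
    proof (rule sum_bounded_above)
      fix x assume "x \<in> nbh V E v - {u0}"
      then have "x \<in> V" by (simp add: nbh_def)
      then show "CC c (degree V E x) \<le> CC c ?d" using mn deg by (intro CC_mono) auto
    qed
    also have "card (nbh V E v - {u0}) = ?d - 1" using u0 finn by (simp add: deg_nbh)
    finally show "(\<Sum>x\<in>nbh V E v - {u0}. CC c (degree V E x)) \<le> real (?d - 1) * CC c ?d" .
  qed
  finally have "(\<Sum>x\<in>?N. CC c (degree V E x)) \<le> CC c ?d + (CC c (?d + 1) + real (?d - 1) * CC c ?d)"
    by simp
  also have "\<dots> = real ?d * CC c ?d + CC c (?d + 1)" using dpos by (simp add: of_nat_diff algebra_simps)
  also have "\<dots> = 1" using CC_rec[of ?d] dpos dD by simp
  finally have "(\<Sum>x\<in>?N. CC c (degree V E x)) \<le> 1" .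
  then show ?thesis using split pW by simp
qed

end



context gsetup
begin

lemma caseB2:
  assumes fin: "finite V" and vV: "v \<in> V" and deg: "\<forall>x\<in>V. degree V E x \<le> D - 1"
    and ncl: "\<forall>x\<in>V. \<not> iscl V E x"
    and mn: "\<forall>x\<in>V. degree V E v \<le> degree V E x"
    and nB: "\<forall>x\<in>V. degree V E x = degree V E v \<longrightarrow> (\<forall>u\<in>nbh V E x. \<not> degree V E v < degree V E u)"
  shows "(\<Sum>x\<in>V. wt c V E x) \<le> 1 + (\<Sum>x\<in>V - cnb V E v. wt c (V - cnb V E v) E x)"
proof -
  let ?N = "cnb V E v"
  let ?W = "V - ?N"
  let ?d = "degree V E v"
  have NV: "?N \<subseteq> V" by (rule cnb_sub[OF vV])
  have finn: "finite (nbh V E v)" by (rule nbh_fin[OF fin])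
  have wtV: "\<And>x. x \<in> V \<Longrightarrow> wt c V E x = CC c (degree V E x)" using ncl by (simp add: wt_def)
  have split: "(\<Sum>x\<in>V. wt c V E x) = (\<Sum>x\<in>?W. CC c (degree V E x)) + (\<Sum>x\<in>?N. CC c (degree V E x))"
    using sum.subset_diff[OF NV fin, of "wt c V E"] wtV NV by (simp add: subset_iff)
  have finW: "finite ?W" using fin by simp
  note R = restW[OF fin vV deg ncl]
  have dN: "\<And>u. u \<in> nbh V E v \<Longrightarrow> degree V E u = ?d"
  proof -
    fix u assume u: "u \<in> nbh V E v"
    then have "u \<in> V" by (simp add: nbh_def)
    then show "degree V E u = ?d" using mn nB vV u by force
  qed
  have "\<not> iscl V E v" using ncl vV by blast
  then obtain u1 u2 where u12: "u1 \<in> nbh V E v" "u2 \<in> nbh V E v" "u1 \<noteq> u2" "\<not> E u1 u2"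
    using dN unfolding iscl_def by blast
  have u1V: "u1 \<in> V" using u12 by (simp add: nbh_def)
  have d2: "2 \<le> ?d"
  proof -
    have "{u1, u2} \<subseteq> nbh V E v" using u12 by auto
    then have "card {u1, u2} \<le> card (nbh V E v)" by (rule card_mono[OF finn])
    then show ?thesis using u12(3) by (simp add: deg_nbh)
  qed
  have dD: "?d \<le> D - 1" using deg vV by blast
  obtain w where w: "w \<in> nbh V E u1" "w \<notin> ?N"
  proof (rule ccontr)
    assume "\<not> thesis"
    then have "nbh V E u1 \<subseteq> ?N" using that by blast
    moreover have "u1 \<notin> nbh V E u1" "u2 \<notin> nbh V E u1" using notin_nbh u12(4) by (auto simp: nbh_def)
    ultimately have sub: "nbh V E u1 \<subseteq> ?N - {u1, u2}" by blast
    have "card (?N - {u1, u2}) = ?d - 1"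
      using card_cnb[OF fin, of v] u12 cnb_fin[OF fin, of v] by (simp add: cnb_def card_Diff_subset)
    moreover have "card (nbh V E u1) \<le> card (?N - {u1, u2})"
      using sub cnb_fin[OF fin, of v] by (intro card_mono) auto
    ultimately have "degree V E u1 \<le> ?d - 1" by (simp add: deg_nbh)
    then show False using dN[OF u12(1)] d2 by simp
  qed
  have wV: "w \<in> V" using w by (simp add: nbh_def)
  have wW: "w \<in> ?W" using w wV by simp
  have dw: "degree V E w = ?d" using nB u1V dN[OF u12(1)] w(1) mn wV by force
  have dwW: "degree ?W E w < ?d"
  proof -
    have "nbh ?W E w \<subset> nbh V E w"
    proof
      show "nbh ?W E w \<subseteq> nbh V E w" by (rule nbh_mono) auto
      have "u1 \<in> nbh V E w" using w(1) sym u1V by (simp add: nbh_def)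
      moreover have "u1 \<notin> nbh ?W E w" using u12(1) by (simp add: nbh_def cnb_def)
      ultimately show "nbh ?W E w \<noteq> nbh V E w" by blast
    qed
    then have "card (nbh ?W E w) < card (nbh V E w)" by (rule psubset_card_mono[OF nbh_fin[OF fin]])
    then show ?thesis using dw by (simp add: deg_nbh)
  qed
  have hge: "\<forall>y\<in>cnb ?W E w. ?d \<le> degree V E y"
    using cnb_sub[OF wW] mn by auto
  have s1: "(\<Sum>x\<in>?W. wt c ?W E x) = (\<Sum>x\<in>?W. CC c (degree V E x)) + (\<Sum>x\<in>?W. slk c ?W E (degree V E) x)"
    by (rule S1[OF finW])
  have g: "CC c (?d - 1) - CC c ?d \<le> (\<Sum>x\<in>?W. slk c ?W E (degree V E) x)"
    by (rule S3[OF finW R wW d2 dD dw dwW hge])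
  have "(\<Sum>x\<in>?N. CC c (degree V E x)) = (\<Sum>x\<in>?N. CC c ?d)"
    using dN by (intro sum.cong) (auto simp: cnb_def)
  also have "\<dots> = (real ?d + 1) * CC c ?d" using card_cnb[OF fin, of v] by simp
  finally have sN: "(\<Sum>x\<in>?N. CC c (degree V E x)) = (real ?d + 1) * CC c ?d" .
  have r: "real ?d * CC c ?d + CC c (?d + 1) = 1" using CC_rec[of ?d] d2 dD by simp
  have cv: "CC c ?d - CC c (?d + 1) \<le> CC c (?d - 1) - CC c ?d" by (rule convex[OF d2 dD])
  show ?thesis using split s1 g sN r cv by (simp add: algebra_simps)
qed

lemma main:
  "finite V \<Longrightarrow> \<forall>x\<in>V. degree V E x \<le> D - 1 \<Longrightarrow>
   \<exists>S\<subseteq>V. (\<forall>u\<in>S. \<forall>v\<in>S. \<not> E u v) \<and> (\<Sum>x\<in>V. wt c V E x) \<le> real (card S)"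
proof (induction "card V" arbitrary: V rule: less_induct)
  case less
  note fin = less.prems(1) and deg = less.prems(2)
  have IH: "\<And>W. card W < card V \<Longrightarrow> finite W \<Longrightarrow> \<forall>x\<in>W. degree W E x \<le> D - 1 \<Longrightarrow>
              \<exists>S\<subseteq>W. (\<forall>u\<in>S. \<forall>v\<in>S. \<not> E u v) \<and> (\<Sum>x\<in>W. wt c W E x) \<le> real (card S)"
    using less.hyps by blast
  show ?case
  proof (cases "V = {}")
    case True then show ?thesis by simp
  next
    case False
    show ?thesis
    proof (cases "\<exists>v\<in>V. iscl V E v")
      case True
      then obtain v where v: "v \<in> V" "iscl V E v" by blast
      show ?thesis by (rule step_lemma[OF fin v(1) deg IH caseA[OF fin v]])
    next
      case ncl': False
      then have ncl: "\<forall>x\<in>V. \<not> iscl V E x" by blast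
      have "Min (degree V E ` V) \<in> degree V E ` V" using fin False by simp
      then obtain v where v: "v \<in> V" "degree V E v = Min (degree V E ` V)" by (metis imageE)
      have mn0: "\<forall>x\<in>V. degree V E v \<le> degree V E x" using v fin by simp
      show ?thesis
      proof (cases "\<exists>x\<in>V. degree V E x = degree V E v \<and> (\<exists>u\<in>nbh V E x. degree V E v < degree V E u)")
        case True
        then obtain x u0 where x: "x \<in> V" "degree V E x = degree V E v" "u0 \<in> nbh V E x"
          "degree V E v < degree V E u0" by blast
        have mn: "\<forall>y\<in>V. degree V E x \<le> degree V E y" using mn0 x by simp
        have x4: "degree V E x < degree V E u0" using x(2) x(4) by linarith
        show ?thesis
          by (rule step_lemma[OF fin x(1) deg IH caseB1[OF fin x(1) deg ncl mn x(3) x4]])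
      next
        case False
        then have nB: "\<forall>x\<in>V. degree V E x = degree V E v \<longrightarrow> (\<forall>u\<in>nbh V E x. \<not> degree V E v < degree V E u)"
          by blast
        show ?thesis by (rule step_lemma[OF fin v(1) deg IH caseB2[OF fin v(1) deg ncl mn0 nB]])
      qed
    qed
  qed
qed

end



lemma reach_cnb:
  assumes sg: "simple_graph V E" and xV: "x \<in> V" and cl: "iscl V E x" and r: "E\<^sup>*\<^sup>* x y"
  shows "y \<in> cnb V E x"
  using r
proof (induction rule: rtranclp_induct)
  case base then show ?case by (simp add: cnb_def)
next
  case (step y z)
  interpret sgr E using sg by unfold_locales (auto simp: simple_graph_def)
  have fin: "finite V" using sg by (simp add: simple_graph_def)
  have zV: "z \<in> V" using step(2) sg by (simp add: simple_graph_def)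
  show ?case
  proof (rule ccontr)
    assume "z \<notin> cnb V E x"
    then have "\<not> E z y" using iscl_closed[OF fin xV cl zV _ step(3)] by blast
    then show False using step(2) sym by blast
  qed
qed

theorem theorem4:
  fixes \<Delta> \<Delta>' :: nat and c :: "nat \<Rightarrow> real"
    and V :: "'a set" and E :: "'a \<Rightarrow> 'a \<Rightarrow> bool"
  assumes "\<Delta> \<ge> 4"
    and "c \<Delta> = 1 / real \<Delta>"
    and "\<forall>i\<in>{1..\<Delta>-1}. real i * c i + c (i + 1) = 1"
    and "3 \<le> \<Delta>'" and "\<Delta>' < \<Delta>"
    and "graph_class \<Delta>' V E"
  shows "real (indep_number V E) \<ge> (\<Sum>i=1..\<Delta>'. c i * real (card (deg_set V E i)))"
proof -
  note gc = assms(6)[unfolded graph_class_def]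
  have sg: "simple_graph V E" using gc by blast
  have fin: "finite V" using sg by (simp add: simple_graph_def)
  have conn: "\<forall>u\<in>V. \<forall>v\<in>V. E\<^sup>*\<^sup>* u v" using gc by (simp add: connected_graph_def)
  have md: "\<forall>v\<in>V. degree V E v \<le> \<Delta>'" "\<exists>v\<in>V. degree V E v = \<Delta>'"
    using gc by (auto simp: max_degree_def)
  have nK: "\<not> is_K V E (\<Delta>' + 1)" using gc by blast
  interpret gsetup \<Delta> c E
    using assms(1,2,3) sg by unfold_locales (auto simp: simple_graph_def)
  have deg: "\<forall>x\<in>V. degree V E x \<le> \<Delta> - 1" using md(1) assms(5) by fastforce
  obtain S where S: "S \<subseteq> V" "\<forall>u\<in>S. \<forall>v\<in>S. \<not> E u v" "(\<Sum>x\<in>V. wt c V E x) \<le> real (card S)"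
    using main[OF fin deg] by blast
  have ncl: "\<not> iscl V E x" if xV: "x \<in> V" for x
  proof
    assume cl: "iscl V E x"
    have Vc: "V = cnb V E x"
      using reach_cnb[OF sg xV cl] conn xV cnb_sub[OF xV] by blast
    have dall: "\<And>y. y \<in> V \<Longrightarrow> degree V E y = degree V E x"
      using iscl_mem[OF fin xV cl] Vc by blast
    have k: "degree V E x = \<Delta>'" using md(2) dall by metis
    have cV: "card V = \<Delta>' + 1" using card_cnb[OF fin, of x] Vc k by simp
    have "is_complete_graph V E"
      unfolding is_complete_graph_def
    proof (intro ballI impI)
      fix u v assume u: "u \<in> V" and v: "v \<in> V" and ne: "u \<noteq> v"
      have "cnb V E u = V" using iscl_mem[OF fin xV cl, of u] Vc u by auto
      then have "v \<in> nbh V E u" using v ne by (auto simp: cnb_def)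
      then show "E u v" by (simp add: nbh_def)
    qed
    then show False using nK cV by (simp add: is_K_def)
  qed
  have d1: "1 \<le> degree V E x" if xV: "x \<in> V" for x
  proof (rule ccontr)
    assume "\<not> 1 \<le> degree V E x"
    then have "nbh V E x = {}" using nbh_fin[OF fin, of x] by (simp add: deg_nbh Suc_le_eq card_gt_0_iff)
    then have "iscl V E x" by (simp add: iscl_def)
    then show False using ncl xV by blast
  qed
  have "(\<Sum>i=1..\<Delta>'. c i * real (card (deg_set V E i)))
      = (\<Sum>i\<in>{1..\<Delta>'}. \<Sum>x\<in>{x. x \<in> V \<and> degree V E x = i}. c (degree V E x))"
  proof (rule sum.cong[OF refl])
    fix i assume "i \<in> {1..\<Delta>'}"
    have "(\<Sum>x\<in>{x. x \<in> V \<and> degree V E x = i}. c (degree V E x))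
        = (\<Sum>x\<in>{x. x \<in> V \<and> degree V E x = i}. c i)" by (rule sum.cong) auto
    then show "c i * real (card (deg_set V E i)) = (\<Sum>x\<in>{x. x \<in> V \<and> degree V E x = i}. c (degree V E x))"
      by (simp add: deg_set_def mult.commute)
  qed
  also have "\<dots> = (\<Sum>x\<in>V. c (degree V E x))"
  proof -
    have img: "degree V E ` V \<subseteq> {1..\<Delta>'}" using d1 md(1) by auto
    show ?thesis by (rule sum.group[OF fin finite_atLeastAtMost img])
  qed
  also have "\<dots> = (\<Sum>x\<in>V. wt c V E x)"
  proof (intro sum.cong refl)
    fix x assume x: "x \<in> V"
    then have "degree V E x \<noteq> 0" using d1 by force
    then show "c (degree V E x) = wt c V E x" using ncl[OF x] by (simp add: wt_def CC_def)
  qed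
  also have "\<dots> \<le> real (card S)" by (rule S(3))
  also have "card S \<le> indep_number V E"
  proof -
    have "S \<in> {S. independent_set V E S}" using S by (simp add: independent_set_def)
    moreover have "finite (card ` {S. independent_set V E S})"
    proof -
      have "{S. independent_set V E S} \<subseteq> Pow V" by (auto simp: independent_set_def)
      then have "finite {S. independent_set V E S}" using fin by (meson finite_Pow_iff finite_subset)
      then show ?thesis by (rule finite_imageI)
    qed
    ultimately show ?thesis unfolding indep_number_def by (metis Max_ge imageI)
  qed
  finally show ?thesis by simp
qed



end
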